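(* Under the policy $\pi=\texttt{EBHD-ETC}$, the event $$\mathcal H_T=\Big\{\forall \rho\le \tfrac TK,\ \forall G\in\mathcal G:\ |U(G;\tilde\mu^\rho)-U(G;\mu)|\le 2M\epsilon^\rho\Big\}$$ satisfies $\Pr(\mathcal H_T)\ge 1-\frac1T$.
   Context: Model: $M$ agents $\mathcal M$, $K>M$ arms $\mathcal K$; pair $(m,k)$ has a Bernoulli distribution of mean $\mu_{m,k}\in[0,1]$. Each round every agent pulls an arm; agent $m$ receives an independent Bernoulli sample of its arm if no other agent pulls the same arm, else $0$. A matching $G$ assigns an arm $k^G_m$ to each agent; $\mathcal G$ is the set of these; $U(G;w)=\sum_m w_{m,k^G_m}\mathbb 1\{\forall m'\ne m:k^G_{m'}\ne k^G_m\}$; $G^*=\arg\max U(G;\mu)$ unique. Each agent may query one arm per round as a hint, observing an independent sample. Covering matchings $R_i$ ($i\le K$) match agent $m$ to arm $((m+i-2)\bmod K)+1$. $\texttt{Hungarian}(w)$ returns an assignment of agents to distinct arms maximizing $\sum_m w_{m,k^G_m}$ (common tie-breaking). Decentralized algorithm $\texttt{EBHD-ETC}$ over horizon $T$: after a rank-assignment phase, epochs $\rho=0,1,\dots$; at the start of epoch $\rho$ all agents share a matrix $\tilde\mu^\rho$ ($\tilde\mu^0=0$). In epoch $\rho$: $G^\rho=\texttt{Hungarian}(\tilde\mu^\rho)$; for $K$ consecutive rounds $t$ each agent $m$ pulls its arm in $G^\rho$ and queries a hint on its arm in $R_{(t\bmod K)+1}$, updating its own empirical means $\hat\mu_{m,k}$;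 then a collision-based communication phase of $O(M^2K)$ rounds after which all agents hold the same $\tilde\mu^{\rho+1}$ with $\hat\mu^{\rho+1}_{m,k}\le\tilde\mu^{\rho+1}_{m,k}\le\hat\mu^{\rho+1}_{m,k}+\sqrt{1/(\rho+1)}$. With $\eta=\sqrt{2/(MT^2)}$ and $\epsilon^\rho=\sqrt{\log(2/\eta)/\rho}$, an active edge set $\mathcal C^\rho$ ($\mathcal C^0=\mathcal M\times\mathcal K$) is updated after each epoch: for $(m,k)\in\mathcal C^\rho$, $G^\rho_{(m,k)}=\{(m,k)\}\cup\texttt{Hungarian}(\tilde\mu^\rho_{-m,-k})$ (row $m$, column $k$ removed), and $(m,k)\in\mathcal C^{\rho+1}$ iff $U(G^\rho;\tilde\mu^\rho)-U(G^\rho_{(m,k)};\tilde\mu^\rho)\le 4M\epsilon^\rho$. Epochs continue while $|\mathcal C^\rho|>M$; afterwards agents commit to $\texttt{Hungarian}(\tilde\mu^\rho)$ with no hints or communication. *)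

theory Defs
  imports "HOL-Probability.Probability"
begin

(* Conventions: agents are 0..<M, arms are 0..<K (0-based versions of 1..M, 1..K).
   A weight matrix is a function  w :: nat => nat => real  (w m k for agent m, arm k). *)

definition matchings :: "nat \<Rightarrow> nat \<Rightarrow> (nat \<Rightarrow> nat) set" where
  "matchings M K = {g. \<forall>m<M. g m < K}"

definition U :: "nat \<Rightarrow> (nat \<Rightarrow> nat) \<Rightarrow> (nat \<Rightarrow> nat \<Rightarrow> real) \<Rightarrow> real" where
  "U M g w = (\<Sum>m<M. if (\<forall>m'<M. m' \<noteq> m \<longrightarrow> g m' \<noteq> g m) then w m (g m) else 0)"

(* covering matching R_i (i = 1..K, 1-based as in the paper), rendered 0-based:
   agent m (0-based) is matched to arm (m + i - 1) mod K (0-based) *)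
definition covering :: "nat \<Rightarrow> nat \<Rightarrow> nat \<Rightarrow> nat" where
  "covering K i m = (m + i - 1) mod K"

definition is_hungarian ::
  "((nat \<Rightarrow> nat \<Rightarrow> real) \<Rightarrow> nat set \<Rightarrow> nat set \<Rightarrow> (nat \<Rightarrow> nat)) \<Rightarrow> bool" where
  "is_hungarian hung \<longleftrightarrow>
     (\<forall>w A B. finite A \<and> finite B \<and> card A \<le> card B \<longrightarrow>
        (hung w A B) ` A \<subseteq> B \<and> inj_on (hung w A B) A \<and>
        (\<forall>g. g ` A \<subseteq> B \<and> inj_on g A \<longrightarrow>
              (\<Sum>m\<in>A. w m (g m)) \<le> (\<Sum>m\<in>A. w m (hung w A B m))))"

(* Specification of the communication phase: comm r h is the common matrix
   \<tilde>\<mu>^r obtained from the empirical means h = \<hat>\<mu>^r (r >= 1), with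
   h <= comm r h <= h + sqrt(1/r). *)
definition is_comm :: "nat \<Rightarrow> nat \<Rightarrow> (nat \<Rightarrow> (nat \<Rightarrow> nat \<Rightarrow> real) \<Rightarrow> (nat \<Rightarrow> nat \<Rightarrow> real)) \<Rightarrow> bool" where
  "is_comm M K comm \<longleftrightarrow>
     (\<forall>r h. 1 \<le> r \<and> (\<forall>m<M. \<forall>k<K. 0 \<le> h m k \<and> h m k \<le> 1) \<longrightarrow>
        (\<forall>m<M. \<forall>k<K. h m k \<le> comm r h m k \<and> comm r h m k \<le> h m k + sqrt (1 / real r)))"

(* Randomness: omega (rho, j, m, k, b) is an independent Bernoulli(mu m k) sample used in
   round j (< K) of the exploration part of epoch rho, by agent m on arm k;
   b = True: hint sample, b = False: pull sample. *)
type_synonym sample = "nat \<times> nat \<times> nat \<times> nat \<times> bool \<Rightarrow> bool"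

(* statistics (sum of observed samples, number of observed samples) after rho epochs *)
type_synonym stats = "(nat \<Rightarrow> nat \<Rightarrow> real) \<times> (nat \<Rightarrow> nat \<Rightarrow> nat)"

definition emp_mean :: "stats \<Rightarrow> nat \<Rightarrow> nat \<Rightarrow> real" where
  "emp_mean st m k = fst st m k / real (snd st m k)"

definition tilde_of :: "(nat \<Rightarrow> (nat \<Rightarrow> nat \<Rightarrow> real) \<Rightarrow> (nat \<Rightarrow> nat \<Rightarrow> real))
    \<Rightarrow> nat \<Rightarrow> stats \<Rightarrow> (nat \<Rightarrow> nat \<Rightarrow> real)" where
  "tilde_of comm rho st = (if rho = 0 then (\<lambda>m k. 0) else comm rho (emp_mean st))"

(* one exploration epoch: agents pull according to G (collision gives no sample),
   and in round j of the epoch (global round start + j) agent m queries a hint on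
   its arm in the covering matching R_{((start + j) mod K) + 1} *)
definition epoch_update :: "nat \<Rightarrow> nat \<Rightarrow> sample \<Rightarrow> nat \<Rightarrow> nat \<Rightarrow> (nat \<Rightarrow> nat) \<Rightarrow> stats \<Rightarrow> stats" where
  "epoch_update M K \<omega> rho start G st =
     (let nocoll = (\<lambda>m. \<forall>m'<M. m' \<noteq> m \<longrightarrow> G m' \<noteq> G m);
          hint = (\<lambda>j m. covering K (((start + j) mod K) + 1) m);
          cnt = (\<lambda>m k. card {j. j < K \<and> nocoll m \<and> G m = k}
                      + card {j. j < K \<and> hint j m = k});
          sm = (\<lambda>m k. real (card {j. j < K \<and> nocoll m \<and> G m = k \<and> \<omega> (rho, j, m, k, False)})
                     + real (card {j. j < K \<and> hint j m = k \<and> \<omega> (rho, j, m, k, True)}))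
      in (\<lambda>m k. fst st m k + sm m k, \<lambda>m k. snd st m k + cnt m k))"

fun run :: "nat \<Rightarrow> nat \<Rightarrow> ((nat \<Rightarrow> nat \<Rightarrow> real) \<Rightarrow> nat set \<Rightarrow> nat set \<Rightarrow> (nat \<Rightarrow> nat))
    \<Rightarrow> (nat \<Rightarrow> (nat \<Rightarrow> nat \<Rightarrow> real) \<Rightarrow> (nat \<Rightarrow> nat \<Rightarrow> real)) \<Rightarrow> (nat \<Rightarrow> nat)
    \<Rightarrow> sample \<Rightarrow> nat \<Rightarrow> stats" where
  "run M K hung comm start \<omega> 0 = ((\<lambda>m k. 0), (\<lambda>m k. 0))"
| "run M K hung comm start \<omega> (Suc rho) =
     (let st = run M K hung comm start \<omega> rho;
          G = hung (tilde_of comm rho st) {..<M} {..<K}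
      in epoch_update M K \<omega> rho (start rho) G st)"

definition mu_tilde where
  "mu_tilde M K hung comm start \<omega> rho =
     tilde_of comm rho (run M K hung comm start \<omega> rho)"

definition eta :: "nat \<Rightarrow> nat \<Rightarrow> real" where
  "eta M T = sqrt (2 / (real M * (real T)^2))"

(* \<epsilon>^rho = sqrt(log(2/eta)/rho), meaningful for rho >= 1 (\<epsilon>^0 = +infinity) *)
definition eps :: "nat \<Rightarrow> nat \<Rightarrow> nat \<Rightarrow> real" where
  "eps M T rho = sqrt (ln (2 / eta M T) / real rho)"

fun active :: "nat \<Rightarrow> nat \<Rightarrow> nat \<Rightarrow> ((nat \<Rightarrow> nat \<Rightarrow> real) \<Rightarrow> nat set \<Rightarrow> nat set \<Rightarrow> (nat \<Rightarrow> nat))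
    \<Rightarrow> (nat \<Rightarrow> (nat \<Rightarrow> nat \<Rightarrow> real) \<Rightarrow> (nat \<Rightarrow> nat \<Rightarrow> real)) \<Rightarrow> (nat \<Rightarrow> nat)
    \<Rightarrow> sample \<Rightarrow> nat \<Rightarrow> (nat \<times> nat) set" where
  "active M K T hung comm start \<omega> 0 = {..<M} \<times> {..<K}"
| "active M K T hung comm start \<omega> (Suc rho) =
     (let w = mu_tilde M K hung comm start \<omega> rho;
          G = hung w {..<M} {..<K}
      in {(m, k) \<in> active M K T hung comm start \<omega> rho.
            rho = 0 \<or>
            U M G w - U M ((hung (\<lambda>a b. w a b) ({..<M} - {m}) ({..<K} - {k}))(m := k)) w
              \<le> 4 * real M * eps M T rho})"

(* \<tilde>\<mu>^rho exists, i.e. epochs 0..rho-1 were all executed (|C^rho'| > M for rho' < rho) *)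
definition reached where
  "reached M K T hung comm start \<omega> rho \<longleftrightarrow>
     (\<forall>r<rho. card (active M K T hung comm start \<omega> r) > M)"

definition sample_space :: "nat \<Rightarrow> nat \<Rightarrow> nat \<Rightarrow> (nat \<Rightarrow> nat \<Rightarrow> real) \<Rightarrow> sample pmf" where
  "sample_space M K T mu =
     Pi_pmf ({..<T div K} \<times> {..<K} \<times> {..<M} \<times> {..<K} \<times> UNIV) False
            (\<lambda>(rho, j, m, k, b). bernoulli_pmf (mu m k))"

end

theory Submission
  imports Defs
begin


lemma bern_real:
  fixes q l :: real
  assumes "0 \<le> q" "q \<le> 1"
  shows "q * exp (l * (1 - q)) + (1 - q) * exp (- (l * q)) \<le> exp (l\<^sup>2 / 8)"
proof (cases "l \<ge> 0")
  case True
  have pos: "1 + q * (exp l - 1) > 0"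
  proof -
    have "q * (exp l - 1) \<ge> 0" using True assms by simp
    thus ?thesis by simp
  qed
  have "-l * q + ln (1 + q * (exp l - 1)) \<le> l\<^sup>2 / 8"
    using Hoeffdings_lemma_aux[of l q] True assms by simp
  hence "exp (-l * q + ln (1 + q * (exp l - 1))) \<le> exp (l\<^sup>2 / 8)" by simp
  also have "exp (-l * q + ln (1 + q * (exp l - 1))) = exp (-l*q) * exp (ln (1 + q * (exp l - 1)))"
    by (rule exp_add)
  also have "exp (ln (1 + q * (exp l - 1))) = 1 + q * (exp l - 1)"
    using pos by simp
  also have "exp (-l*q) * (1 + q * (exp l - 1)) = q * (exp l * exp (-(l*q))) + (1 - q) * exp (- (l * q))"
    by (simp add: algebra_simps)
  also have "exp l * exp (-(l*q)) = exp (l * (1 - q))"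
    by (simp add: exp_add[symmetric] algebra_simps)
  finally show ?thesis .
next
  case False
  define h where "h = - l"
  have h: "h \<ge> 0" using False h_def by simp
  have pos: "1 + (1 - q) * (exp h - 1) > 0"
  proof -
    have "(1 - q) * (exp h - 1) \<ge> 0" using h assms by simp
    thus ?thesis by simp
  qed
  have "-h * (1 - q) + ln (1 + (1 - q) * (exp h - 1)) \<le> h\<^sup>2 / 8"
    using Hoeffdings_lemma_aux[of h "1 - q"] h assms by simp
  hence "exp (-h * (1 - q) + ln (1 + (1 - q) * (exp h - 1))) \<le> exp (h\<^sup>2 / 8)" by simp
  also have "exp (-h * (1 - q) + ln (1 + (1 - q) * (exp h - 1))) = exp (-h*(1-q)) * exp (ln (1 + (1 - q) * (exp h - 1)))"
    by (rule exp_add)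
  also have "exp (ln (1 + (1 - q) * (exp h - 1))) = 1 + (1 - q) * (exp h - 1)"
    using pos by simp
  also have "exp (-h*(1-q)) * (1 + (1 - q) * (exp h - 1)) = q * exp (-h*(1-q)) + (1 - q) * (exp (-h*(1-q)) * exp h)"
    by (simp add: algebra_simps)
  also have "exp (-h*(1-q)) * exp h = exp (- (l * q))"
    unfolding h_def by (simp add: exp_add[symmetric] algebra_simps)
  also have "exp (-h*(1-q)) = exp (l * (1 - q))" unfolding h_def by simp
  also have "h\<^sup>2 = l\<^sup>2" unfolding h_def by simp
  finally show ?thesis .
qed

lemma bern_hoeff:
  fixes q l :: real
  assumes "0 \<le> q" "q \<le> 1"
  shows "(\<integral>\<^sup>+v. ennreal (exp (l * ((if v then 1 else 0) - q) - l\<^sup>2 / 8)) \<partial>measure_pmf (bernoulli_pmf q)) \<le> 1"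
proof -
  have "(\<integral>\<^sup>+v. ennreal (exp (l * ((if v then 1 else 0) - q) - l\<^sup>2 / 8)) \<partial>measure_pmf (bernoulli_pmf q))
      = (\<Sum>v\<in>UNIV. ennreal (exp (l * ((if v then 1 else 0) - q) - l\<^sup>2 / 8)) * pmf (bernoulli_pmf q) v)"
    by (rule nn_integral_measure_pmf_support) auto
  also have "\<dots> = ennreal (exp (l * (1 - q) - l\<^sup>2 / 8) * q + exp (l * (0 - q) - l\<^sup>2 / 8) * (1 - q))"
    using assms by (simp add: UNIV_bool ennreal_mult ennreal_plus)
  also have "\<dots> \<le> ennreal 1"
  proof (rule ennreal_leI)
    have "exp (l * (1 - q) - l\<^sup>2 / 8) * q + exp (l * (0 - q) - l\<^sup>2 / 8) * (1 - q)
        = (q * exp (l * (1 - q)) + (1 - q) * exp (- (l * q))) / exp (l\<^sup>2 / 8)"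
      by (simp add: exp_diff add_divide_distrib mult.commute)
    also have "\<dots> \<le> 1" using bern_real[OF assms, of l] by simp
    finally show "exp (l * (1 - q) - l\<^sup>2 / 8) * q + exp (l * (0 - q) - l\<^sup>2 / 8) * (1 - q) \<le> 1" .
  qed
  finally show ?thesis by simp
qed

lemma prod_hoeff:
  fixes B S :: "'a set" and P :: "'a \<Rightarrow> bool pmf" and q :: "'a \<Rightarrow> real"
  assumes fin: "finite B" and SB: "S \<subseteq> B"
    and P: "\<And>x. x \<in> S \<Longrightarrow> P x = bernoulli_pmf (q x)"
    and q: "\<And>x. x \<in> S \<Longrightarrow> 0 \<le> q x \<and> q x \<le> 1"
  shows "(\<integral>\<^sup>+g. ennreal (exp (\<Sum>x\<in>S. l * ((if g x then 1 else 0) - q x) - l\<^sup>2 / 8)) \<partial>measure_pmf (Pi_pmf B d P)) \<le> 1"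
proof -
  define F where "F = (\<lambda>x v. if x \<in> S then ennreal (exp (l * ((if v then 1 else 0) - q x) - l\<^sup>2 / 8)) else 1)"
  have finS: "finite S" using fin SB finite_subset by blast
  have eq: "ennreal (exp (\<Sum>x\<in>S. l * ((if g x then 1 else 0) - q x) - l\<^sup>2 / 8)) = (\<Prod>x\<in>B. F x (g x))" for g
  proof -
    have "ennreal (exp (\<Sum>x\<in>S. l * ((if g x then 1 else 0) - q x) - l\<^sup>2 / 8))
        = ennreal (\<Prod>x\<in>S. exp (l * ((if g x then 1 else 0) - q x) - l\<^sup>2 / 8))"
      using finS by (simp add: exp_sum)
    also have "\<dots> = (\<Prod>x\<in>S. ennreal (exp (l * ((if g x then 1 else 0) - q x) - l\<^sup>2 / 8)))"
      by (rule prod_ennreal[symmetric]) simp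
    also have "\<dots> = (\<Prod>x\<in>B \<inter> S. ennreal (exp (l * ((if g x then 1 else 0) - q x) - l\<^sup>2 / 8)))"
      using SB by (simp add: Int_absorb1)
    also have "\<dots> = (\<Prod>x\<in>B. F x (g x))"
      unfolding F_def by (rule prod.inter_restrict[OF fin])
    finally show ?thesis .
  qed
  have "(\<integral>\<^sup>+g. ennreal (exp (\<Sum>x\<in>S. l * ((if g x then 1 else 0) - q x) - l\<^sup>2 / 8)) \<partial>measure_pmf (Pi_pmf B d P))
      = (\<integral>\<^sup>+g. (\<Prod>x\<in>B. F x (g x)) \<partial>measure_pmf (Pi_pmf B d P))"
    by (simp add: eq)
  also have "\<dots> = (\<Prod>x\<in>B. nn_integral (P x) (F x))"
    by (rule nn_integral_prod_Pi_pmf[OF fin])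
  also have "\<dots> \<le> 1"
  proof (rule prod_le_1)
    fix x assume "x \<in> B"
    show "0 \<le> nn_integral (P x) (F x) \<and> nn_integral (P x) (F x) \<le> 1"
    proof (cases "x \<in> S")
      case True
      then show ?thesis using bern_hoeff[of "q x" l] q[OF True] P[OF True] by (simp add: F_def)
    next
      case False
      then show ?thesis by (simp add: F_def measure_pmf.emeasure_space_1)
    qed
  qed
  finally show ?thesis .
qed

lemma run_dep:
  "(\<And>x. fst x < rho \<Longrightarrow> \<omega> x = \<omega>' x) \<Longrightarrow>
     run M K hung comm start \<omega> rho = run M K hung comm start \<omega>' rho"
proof (induction rho)
  case 0
  then show ?case by simp
next
  case (Suc rho)
  have IH: "run M K hung comm start \<omega> rho = run M K hung comm start \<omega>' rho"
    using Suc by simp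
  have e: "\<omega> (rho, j, mm, kk, b) = \<omega>' (rho, j, mm, kk, b)" for j mm kk b
    using Suc.prems[of "(rho, j, mm, kk, b)"] by simp
  show ?case by (simp add: IH e Let_def epoch_update_def)
qed

lemma run_Suc_fst:
  "fst (run M K hung comm start \<omega> (Suc rho)) m k =
     fst (run M K hung comm start \<omega> rho) m k
     + real (card {j. j < K \<and> ((\<forall>m'<M. m' \<noteq> m \<longrightarrow> hung (tilde_of comm rho (run M K hung comm start \<omega> rho)) {..<M} {..<K} m' \<noteq> hung (tilde_of comm rho (run M K hung comm start \<omega> rho)) {..<M} {..<K} m)
             \<and> hung (tilde_of comm rho (run M K hung comm start \<omega> rho)) {..<M} {..<K} m = k) \<and> \<omega> (rho, j, m, k, False)})
     + real (card {j. j < K \<and> covering K (((start rho + j) mod K) + 1) m = k \<and> \<omega> (rho, j, m, k, True)})"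
  by (simp add: Let_def epoch_update_def)

lemma run_Suc_snd:
  "snd (run M K hung comm start \<omega> (Suc rho)) m k =
     snd (run M K hung comm start \<omega> rho) m k
     + card {j. j < K \<and> ((\<forall>m'<M. m' \<noteq> m \<longrightarrow> hung (tilde_of comm rho (run M K hung comm start \<omega> rho)) {..<M} {..<K} m' \<noteq> hung (tilde_of comm rho (run M K hung comm start \<omega> rho)) {..<M} {..<K} m)
             \<and> hung (tilde_of comm rho (run M K hung comm start \<omega> rho)) {..<M} {..<K} m = k)}
     + card {j. j < K \<and> covering K (((start rho + j) mod K) + 1) m = k}"
  by (simp add: Let_def epoch_update_def)

lemma sum_ind_card:
  assumes "finite J"
  shows "(\<Sum>j\<in>J. (if P j then 1 else 0 :: real)) = real (card {j\<in>J. P j})"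
  using assms by (simp add: sum.inter_filter[symmetric])

lemma incr:
  fixes J1 J2 :: "nat set" and \<omega> :: sample
  assumes f1: "finite J1" and f2: "finite J2"
  shows "(\<Sum>x\<in>(\<lambda>j. (r,j,m,k,False)) ` J1 \<union> (\<lambda>j. (r,j,m,k,True)) ` J2. l*((if \<omega> x then 1 else 0) - q) - l\<^sup>2/8)
   = l * ((real (card {j\<in>J1. \<omega> (r,j,m,k,False)}) + real (card {j\<in>J2. \<omega> (r,j,m,k,True)}))
          - q * real (card J1 + card J2)) - l\<^sup>2 * real (card J1 + card J2) / 8"
proof -
  let ?f = "\<lambda>x. l*((if \<omega> x then 1 else 0) - q) - l\<^sup>2/8"
  have disj: "(\<lambda>j. (r,j,m,k,False)) ` J1 \<inter> (\<lambda>j. (r,j,m,k,True)) ` J2 = {}" by auto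
  have "(\<Sum>x\<in>(\<lambda>j. (r,j,m,k,False)) ` J1 \<union> (\<lambda>j. (r,j,m,k,True)) ` J2. ?f x)
      = (\<Sum>x\<in>(\<lambda>j. (r,j,m,k,False)) ` J1. ?f x) + (\<Sum>x\<in>(\<lambda>j. (r,j,m,k,True)) ` J2. ?f x)"
    using f1 f2 disj by (intro sum.union_disjoint) auto
  also have "(\<Sum>x\<in>(\<lambda>j. (r,j,m,k,False)) ` J1. ?f x) = (\<Sum>j\<in>J1. ?f (r,j,m,k,False))"
    by (rule sum.reindex_cong[where l="\<lambda>j. (r,j,m,k,False)"]) (auto simp: inj_on_def)
  also have "(\<Sum>x\<in>(\<lambda>j. (r,j,m,k,True)) ` J2. ?f x) = (\<Sum>j\<in>J2. ?f (r,j,m,k,True))"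
    by (rule sum.reindex_cong[where l="\<lambda>j. (r,j,m,k,True)"]) (auto simp: inj_on_def)
  also have "(\<Sum>j\<in>J1. ?f (r,j,m,k,False)) = l * ((\<Sum>j\<in>J1. (if \<omega> (r,j,m,k,False) then 1 else 0)) - q * real (card J1)) - l\<^sup>2 * real (card J1) / 8"
    by (simp add: sum_subtractf sum_distrib_left right_diff_distrib)
  also have "(\<Sum>j\<in>J2. ?f (r,j,m,k,True)) = l * ((\<Sum>j\<in>J2. (if \<omega> (r,j,m,k,True) then 1 else 0)) - q * real (card J2)) - l\<^sup>2 * real (card J2) / 8"
    by (simp add: sum_subtractf sum_distrib_left right_diff_distrib)
  finally show ?thesis
    using sum_ind_card[OF f1, of "\<lambda>j. \<omega> (r,j,m,k,False)"] sum_ind_card[OF f2, of "\<lambda>j. \<omega> (r,j,m,k,True)"]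
    by (simp add: algebra_simps add_divide_distrib)
qed

definition Zv where
  "Zv M K hung comm start (mu :: nat \<Rightarrow> nat \<Rightarrow> real) m k l rho \<omega> =
     ennreal (exp (l * (fst (run M K hung comm start \<omega> rho) m k - mu m k * real (snd (run M K hung comm start \<omega> rho) m k))
                   - l\<^sup>2 * real (snd (run M K hung comm start \<omega> rho) m k) / 8))"

lemma Zstep:
  fixes mu :: "nat \<Rightarrow> nat \<Rightarrow> real"
  assumes mu: "\<forall>m<M. \<forall>k<K. 0 \<le> mu m k \<and> mu m k \<le> 1" and m: "m < M" and k: "k < K"
    and r: "r < T div K"
  shows "(\<integral>\<^sup>+\<omega>. Zv M K hung comm start mu m k l (Suc r) \<omega> \<partial>measure_pmf (sample_space M K T mu))
       \<le> (\<integral>\<^sup>+\<omega>. Zv M K hung comm start mu m k l r \<omega> \<partial>measure_pmf (sample_space M K T mu))"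
proof -
  define N where "N = T div K"
  define I :: "(nat \<times> nat \<times> nat \<times> nat \<times> bool) set" where "I = {..<N} \<times> {..<K} \<times> {..<M} \<times> {..<K} \<times> UNIV"
  define B :: "(nat \<times> nat \<times> nat \<times> nat \<times> bool) set" where "B = {r} \<times> {..<K} \<times> {..<M} \<times> {..<K} \<times> UNIV"
  define A where "A = I - B"
  define P :: "nat \<times> nat \<times> nat \<times> nat \<times> bool \<Rightarrow> bool pmf" where "P = (\<lambda>(rho, j, m, k, b). bernoulli_pmf (mu m k))"
  define mg :: "sample \<times> sample \<Rightarrow> sample" where "mg = (\<lambda>(f,g) x. if x \<in> A then f x else g x)"
  define Z where "Z = Zv M K hung comm start mu m k l"
  have \<Omega>: "sample_space M K T mu = Pi_pmf I False P"
    by (simp add: sample_space_def I_def P_def N_def)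
  have finI: "finite I" unfolding I_def by simp
  have finB: "finite B" unfolding B_def by simp
  have finA: "finite A" unfolding A_def using finI by simp
  have BI: "B \<subseteq> I" unfolding B_def I_def N_def using r by auto
  have AB: "A \<union> B = I" "A \<inter> B = {}" unfolding A_def using BI by auto
  have split: "Pi_pmf I False P = map_pmf mg (pair_pmf (Pi_pmf A False P) (Pi_pmf B False P))"
    unfolding mg_def using Pi_pmf_union[OF finA finB AB(2), of False P] AB(1) by simp
  have gen: "(\<integral>\<^sup>+\<omega>. F \<omega> \<partial>measure_pmf (Pi_pmf I False P))
      = (\<integral>\<^sup>+f. \<integral>\<^sup>+g. F (mg (f,g)) \<partial>measure_pmf (Pi_pmf B False P) \<partial>measure_pmf (Pi_pmf A False P))" for F
    by (simp add: split nn_integral_pair_pmf')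
  have suppA: "f x = False" if "f \<in> set_pmf (Pi_pmf A False P)" "x \<notin> A" for f x
  proof -
    have "f \<in> {f. \<forall>x. x \<notin> A \<longrightarrow> f x = False}"
      using set_Pi_pmf_subset[OF finA, of False P] that(1) by blast
    then show ?thesis using that(2) by blast
  qed
  have suppB: "g x = False" if "g \<in> set_pmf (Pi_pmf B False P)" "x \<notin> B" for g x
  proof -
    have "g \<in> {f. \<forall>x. x \<notin> B \<longrightarrow> f x = False}"
      using set_Pi_pmf_subset[OF finB, of False P] that(1) by blast
    then show ?thesis using that(2) by blast
  qed
  have mgB: "mg (f,g) (r, j, mm, kk, b) = g (r, j, mm, kk, b)" for f g j mm kk b
    unfolding mg_def A_def B_def I_def by auto
  have runeq: "run M K hung comm start (mg (f,g)) r = run M K hung comm start f r"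
    if f: "f \<in> set_pmf (Pi_pmf A False P)" and g: "g \<in> set_pmf (Pi_pmf B False P)" for f g
  proof (rule run_dep)
    fix x :: "nat \<times> nat \<times> nat \<times> nat \<times> bool" assume x: "fst x < r"
    show "mg (f, g) x = f x"
    proof (cases "x \<in> A")
      case True then show ?thesis by (simp add: mg_def)
    next
      case False
      have "x \<notin> B" using x unfolding B_def by auto
      then show ?thesis using False suppA[OF f False] suppB[OF g] by (simp add: mg_def)
    qed
  qed
  define G where "G = (\<lambda>f. hung (tilde_of comm r (run M K hung comm start f r)) {..<M} {..<K})"
  define c where "c = (\<lambda>f. (\<forall>m'<M. m' \<noteq> m \<longrightarrow> G f m' \<noteq> G f m) \<and> G f m = k)"
  define h where "h = (\<lambda>j. covering K (((start r + j) mod K) + 1) m = k)"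
  define S where "S = (\<lambda>f. (\<lambda>j. (r,j,m,k,False)) ` {j. j < K \<and> c f} \<union> (\<lambda>j. (r,j,m,k,True)) ` {j. j < K \<and> h j})"
  define E where "E = (\<lambda>f g. ennreal (exp (\<Sum>x\<in>S f. l * ((if g x then 1 else 0) - mu m k) - l\<^sup>2 / 8)))"
  have SB: "S f \<subseteq> B" for f unfolding S_def B_def using m k by auto
  have Eb: "(\<integral>\<^sup>+g. E f g \<partial>measure_pmf (Pi_pmf B False P)) \<le> 1" for f
    unfolding E_def
    by (rule prod_hoeff[OF finB SB, where P=P and q="\<lambda>_. mu m k" and l=l and d=False, simplified])
       (use SB mu m k in \<open>auto simp: P_def B_def S_def\<close>)
  have Zr: "Z r (mg (f,g)) = Z r f"
    if f: "f \<in> set_pmf (Pi_pmf A False P)" and g: "g \<in> set_pmf (Pi_pmf B False P)" for f g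
    unfolding Z_def Zv_def using runeq[OF f g] by simp
  have Zs: "Z (Suc r) (mg (f,g)) = Z r f * E f g"
    if f: "f \<in> set_pmf (Pi_pmf A False P)" and g: "g \<in> set_pmf (Pi_pmf B False P)" for f g
  proof -
    let ?st = "run M K hung comm start f r"
    have fst1: "fst (run M K hung comm start (mg (f,g)) (Suc r)) m k = fst ?st m k
        + real (card {j\<in>{j. j < K \<and> c f}. g (r,j,m,k,False)}) + real (card {j\<in>{j. j < K \<and> h j}. g (r,j,m,k,True)})"
      unfolding run_Suc_fst runeq[OF f g] mgB c_def G_def h_def
      by (simp add: conj_assoc)
    have snd1: "snd (run M K hung comm start (mg (f,g)) (Suc r)) m k = snd ?st m k
        + (card {j. j < K \<and> c f} + card {j. j < K \<and> h j})"
      unfolding run_Suc_snd runeq[OF f g] c_def G_def h_def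
      by (simp add: conj_assoc)
    have inc: "(\<Sum>x\<in>S f. l * ((if g x then 1 else 0) - mu m k) - l\<^sup>2 / 8)
        = l * ((real (card {j\<in>{j. j < K \<and> c f}. g (r,j,m,k,False)}) + real (card {j\<in>{j. j < K \<and> h j}. g (r,j,m,k,True)}))
          - mu m k * real (card {j. j < K \<and> c f} + card {j. j < K \<and> h j})) - l\<^sup>2 * real (card {j. j < K \<and> c f} + card {j. j < K \<and> h j}) / 8"
      unfolding S_def by (rule incr) auto
    have "Z (Suc r) (mg (f,g)) = ennreal (exp (l * (fst ?st m k - mu m k * real (snd ?st m k)) - l\<^sup>2 * real (snd ?st m k) / 8)
          * exp (\<Sum>x\<in>S f. l * ((if g x then 1 else 0) - mu m k) - l\<^sup>2 / 8))"
      unfolding Z_def Zv_def fst1 snd1 inc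
      by (simp add: exp_add[symmetric] algebra_simps add_divide_distrib diff_divide_distrib)
    also have "\<dots> = Z r f * E f g"
      unfolding Z_def Zv_def E_def by (simp add: ennreal_mult)
    finally show ?thesis .
  qed
  have "(\<integral>\<^sup>+\<omega>. Z (Suc r) \<omega> \<partial>measure_pmf (Pi_pmf I False P))
      = (\<integral>\<^sup>+f. \<integral>\<^sup>+g. Z (Suc r) (mg (f,g)) \<partial>measure_pmf (Pi_pmf B False P) \<partial>measure_pmf (Pi_pmf A False P))"
    by (rule gen)
  also have "\<dots> = (\<integral>\<^sup>+f. \<integral>\<^sup>+g. Z r f * E f g \<partial>measure_pmf (Pi_pmf B False P) \<partial>measure_pmf (Pi_pmf A False P))"
    by (intro nn_integral_cong_AE AE_pmfI) (simp add: Zs)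
  also have "\<dots> = (\<integral>\<^sup>+f. Z r f * (\<integral>\<^sup>+g. E f g \<partial>measure_pmf (Pi_pmf B False P)) \<partial>measure_pmf (Pi_pmf A False P))"
    by (simp add: nn_integral_cmult)
  also have "\<dots> \<le> (\<integral>\<^sup>+f. Z r f \<partial>measure_pmf (Pi_pmf A False P))"
  proof (rule nn_integral_mono)
    fix f
    have "Z r f * (\<integral>\<^sup>+g. E f g \<partial>measure_pmf (Pi_pmf B False P)) \<le> Z r f * 1"
      by (rule mult_left_mono[OF Eb]) simp
    then show "Z r f * (\<integral>\<^sup>+g. E f g \<partial>measure_pmf (Pi_pmf B False P)) \<le> Z r f" by simp
  qed
  also have "\<dots> = (\<integral>\<^sup>+f. \<integral>\<^sup>+g. Z r f \<partial>measure_pmf (Pi_pmf B False P) \<partial>measure_pmf (Pi_pmf A False P))"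
    by (simp add: measure_pmf.emeasure_space_1)
  also have "\<dots> = (\<integral>\<^sup>+f. \<integral>\<^sup>+g. Z r (mg (f,g)) \<partial>measure_pmf (Pi_pmf B False P) \<partial>measure_pmf (Pi_pmf A False P))"
    by (intro nn_integral_cong_AE AE_pmfI) (simp add: Zr)
  also have "\<dots> = (\<integral>\<^sup>+\<omega>. Z r \<omega> \<partial>measure_pmf (Pi_pmf I False P))"
    by (rule gen[symmetric])
  finally show ?thesis unfolding \<Omega> Z_def .
qed



lemma Z_bound:
  fixes mu :: "nat \<Rightarrow> nat \<Rightarrow> real"
  assumes mu: "\<forall>m<M. \<forall>k<K. 0 \<le> mu m k \<and> mu m k \<le> 1" and m: "m < M" and k: "k < K"
  shows "rho \<le> T div K \<Longrightarrow> (\<integral>\<^sup>+\<omega>. Zv M K hung comm start mu m k l rho \<omega> \<partial>measure_pmf (sample_space M K T mu)) \<le> 1"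
proof (induction rho)
  case 0
  then show ?case by (simp add: Zv_def measure_pmf.emeasure_space_1)
next
  case (Suc r)
  have "(\<integral>\<^sup>+\<omega>. Zv M K hung comm start mu m k l (Suc r) \<omega> \<partial>measure_pmf (sample_space M K T mu))
     \<le> (\<integral>\<^sup>+\<omega>. Zv M K hung comm start mu m k l r \<omega> \<partial>measure_pmf (sample_space M K T mu))"
    using Suc.prems by (intro Zstep[OF mu m k]) simp
  also have "\<dots> \<le> 1" using Suc by simp
  finally show ?case .
qed

lemma hint_exists:
  assumes K: "0 < K" and k: "k < K"
  shows "\<exists>j<K. covering K (((s + j) mod K) + 1) m = k"
proof -
  define a where "a = (m + s) mod K"
  have a: "a < K" using K unfolding a_def by simp
  define j where "j = (K - a + k) mod K"
  have "covering K (((s + j) mod K) + 1) m = (m + (s + j) mod K) mod K"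
    by (simp add: covering_def)
  also have "\<dots> = (m + (s + j)) mod K" by (rule mod_add_right_eq)
  also have "m + (s + j) = (m + s) + j" by simp
  also have "((m + s) + j) mod K = (a + j) mod K" unfolding a_def by (rule mod_add_left_eq[symmetric])
  also have "\<dots> = (a + (K - a + k)) mod K" unfolding j_def by (rule mod_add_right_eq)
  also have "a + (K - a + k) = K + k" using a by simp
  also have "(K + k) mod K = k" using k by simp
  finally have "covering K (((s + j) mod K) + 1) m = k" .
  moreover have "j < K" using K unfolding j_def by simp
  ultimately show ?thesis by blast
qed

lemma snd_ge:
  assumes K: "0 < K" and k: "k < K"
  shows "rho \<le> snd (run M K hung comm start \<omega> rho) m k"
proof (induction rho)
  case 0 then show ?case by simp
next
  case (Suc r)
  obtain j where j: "j < K" "covering K (((start r + j) mod K) + 1) m = k"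
    using hint_exists[OF K k] by blast
  have "card {j. j < K \<and> covering K (((start r + j) mod K) + 1) m = k} \<ge> 1"
  proof -
    have "{j. j < K \<and> covering K (((start r + j) mod K) + 1) m = k} \<noteq> {}" using j by blast
    moreover have "finite {j. j < K \<and> covering K (((start r + j) mod K) + 1) m = k}" by simp
    ultimately show ?thesis by (simp add: Suc_le_eq card_gt_0_iff)
  qed
  then show ?case using Suc unfolding run_Suc_snd by linarith
qed

lemma fst_bounds_gen:
  fixes a :: real and b :: nat and K :: nat
  assumes "0 \<le> a \<and> a \<le> real b"
  shows "0 \<le> a + real (card {j. j < K \<and> C1 \<and> Q1 j}) + real (card {j. j < K \<and> C2 j \<and> Q2 j}) \<and>
         a + real (card {j. j < K \<and> C1 \<and> Q1 j}) + real (card {j. j < K \<and> C2 j \<and> Q2 j})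
           \<le> real (b + card {j. j < K \<and> C1} + card {j. j < K \<and> C2 j})"
proof -
  have c1: "card {j. j < K \<and> C1 \<and> Q1 j} \<le> card {j. j < K \<and> C1}" by (rule card_mono, rule finite_subset[of _ "{..<K}"]) auto
  have c2: "card {j. j < K \<and> C2 j \<and> Q2 j} \<le> card {j. j < K \<and> C2 j}" by (rule card_mono, rule finite_subset[of _ "{..<K}"]) auto
  show ?thesis using assms c1 c2 by (simp add: of_nat_mono)
qed

lemma fst_bounds:
  "0 \<le> fst (run M K hung comm start \<omega> rho) m k \<and>
   fst (run M K hung comm start \<omega> rho) m k \<le> real (snd (run M K hung comm start \<omega> rho) m k)"
proof (induction rho)
  case 0 then show ?case by simp
next
  case (Suc r)
  show ?case
    unfolding run_Suc_fst run_Suc_snd by (rule fst_bounds_gen[OF Suc])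
qed

lemma U_diff:
  assumes "\<forall>m<M. \<bar>w m (g m) - v m (g m)\<bar> \<le> d"
  shows "\<bar>U M g w - U M g v\<bar> \<le> real M * d"
proof -
  define F where "F = (\<lambda>m. (if (\<forall>m'<M. m' \<noteq> m \<longrightarrow> g m' \<noteq> g m) then w m (g m) - v m (g m) else 0))"
  have e: "U M g w - U M g v = (\<Sum>m<M. F m)"
    unfolding U_def F_def sum_subtractf[symmetric] by (intro sum.cong) auto
  have a: "\<bar>\<Sum>m<M. F m\<bar> \<le> (\<Sum>m<M. \<bar>F m\<bar>)"
    by (rule sum_abs)
  have b: "(\<Sum>m<M. \<bar>F m\<bar>) \<le> (\<Sum>m<M. d)"
    using assms unfolding F_def by (intro sum_mono) auto
  show ?thesis using e order_trans[OF a b] by simp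
qed



lemma tail:
  fixes mu :: "nat \<Rightarrow> nat \<Rightarrow> real" and s e :: real
  assumes mu: "\<forall>m<M. \<forall>k<K. 0 \<le> mu m k \<and> mu m k \<le> 1" and m: "m < M" and k: "k < K"
    and K: "0 < K" and r1: "1 \<le> rho" and r2: "rho \<le> T div K" and e: "0 \<le> e" and s: "s\<^sup>2 = 1"
  shows "measure_pmf.prob (sample_space M K T mu)
           {\<omega>. s * (emp_mean (run M K hung comm start \<omega> rho) m k - mu m k) > e} \<le> exp (-(2 * e\<^sup>2 * rho))"
proof -
  define X where "X = {\<omega>. s * (emp_mean (run M K hung comm start \<omega> rho) m k - mu m k) > e}"
  define \<Omega> where "\<Omega> = measure_pmf (sample_space M K T mu)"
  define l where "l = 4 * s * e"
  define c where "c = exp (2 * e\<^sup>2 * rho)"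
  have cpos: "c > 0" unfolding c_def by simp
  have bound: "c \<le> exp (l * (fst (run M K hung comm start \<omega> rho) m k - mu m k * real (snd (run M K hung comm start \<omega> rho) m k))
                   - l\<^sup>2 * real (snd (run M K hung comm start \<omega> rho) m k) / 8)" if "\<omega> \<in> X" for \<omega>
  proof -
    define S where "S = fst (run M K hung comm start \<omega> rho) m k"
    define n where "n = real (snd (run M K hung comm start \<omega> rho) m k)"
    have n: "real rho \<le> n" unfolding n_def using snd_ge[OF K k] by simp
    have npos: "n > 0" using n r1 by simp
    have "e < s * (S / n - mu m k)" using that unfolding X_def S_def n_def emp_mean_def by simp
    hence "e * n < s * (S / n - mu m k) * n" using npos by simp
    also have "s * (S / n - mu m k) * n = s * (S - mu m k * n)" using npos by (simp add: field_simps)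
    finally have A: "e * n < s * (S - mu m k * n)" .
    have "l * (S - mu m k * n) = 4 * e * (s * (S - mu m k * n))" unfolding l_def by simp
    also have "\<dots> \<ge> 4 * e * (e * n)" using A e by (intro mult_left_mono) auto
    finally have B: "l * (S - mu m k * n) \<ge> 4 * e\<^sup>2 * n" by (simp add: power2_eq_square)
    have C: "l\<^sup>2 = 16 * e\<^sup>2" unfolding l_def using s by (simp add: power_mult_distrib)
    have "2 * e\<^sup>2 * rho \<le> 2 * e\<^sup>2 * n" using n by (intro mult_left_mono) auto
    also have "\<dots> \<le> l * (S - mu m k * n) - l\<^sup>2 * n / 8" using B C by (simp add: algebra_simps)
    finally show ?thesis unfolding c_def S_def n_def by simp
  qed
  have "ennreal c * emeasure \<Omega> X = (\<integral>\<^sup>+\<omega>. ennreal c * indicator X \<omega> \<partial>\<Omega>)"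
    unfolding \<Omega>_def by (simp add: nn_integral_cmult_indicator)
  also have "\<dots> \<le> (\<integral>\<^sup>+\<omega>. Zv M K hung comm start mu m k l rho \<omega> \<partial>\<Omega>)"
  proof (rule nn_integral_mono)
    fix \<omega>
    show "ennreal c * indicator X \<omega> \<le> Zv M K hung comm start mu m k l rho \<omega>"
      using bound[of \<omega>] unfolding Zv_def by (cases "\<omega> \<in> X") (auto intro: ennreal_leI)
  qed
  also have "\<dots> \<le> 1" unfolding \<Omega>_def by (rule Z_bound[OF mu m k r2])
  finally have "ennreal c * emeasure \<Omega> X \<le> 1" .
  hence "ennreal (c * measure \<Omega> X) \<le> 1"
    unfolding \<Omega>_def measure_pmf.emeasure_eq_measure using cpos by (simp add: ennreal_mult)
  hence "c * measure \<Omega> X \<le> 1" by (simp add: ennreal_le_1)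
  hence "measure \<Omega> X \<le> 1 / c" using cpos by (simp add: field_simps)
  also have "1 / c = exp (-(2 * e\<^sup>2 * rho))" unfolding c_def by (simp add: exp_minus field_simps)
  finally show ?thesis unfolding \<Omega>_def X_def .
qed


lemma L_facts:
  assumes M: "1 \<le> M" and T: "2 \<le> T"
  shows "1 \<le> ln (2 / eta M T)" and "exp (-(2 * ln (2 / eta M T))) = 1 / (2 * real M * (real T)\<^sup>2)"
proof -
  define x where "x = 2 / eta M T"
  have Mp: "real M \<ge> 1" using M by simp
  have Tp: "real T \<ge> 2" using T by simp
  have q: "2 / (real M * (real T)\<^sup>2) > 0" using Mp Tp by simp
  have etapos: "eta M T > 0" unfolding eta_def using q by simp
  have eta2: "(eta M T)\<^sup>2 = 2 / (real M * (real T)\<^sup>2)" unfolding eta_def using q by simp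
  have xpos: "x > 0" unfolding x_def using etapos by simp
  have x2: "x\<^sup>2 = 2 * real M * (real T)\<^sup>2" unfolding x_def using eta2 etapos Mp Tp
    by (simp add: power_divide)
  have "(2::real)\<^sup>2 \<le> (real T)\<^sup>2" using Tp by (intro power_mono) auto
  hence T4: "(real T)\<^sup>2 \<ge> 4" by simp
  have "1 * 4 \<le> real M * (real T)\<^sup>2" using Mp T4 by (intro mult_mono) auto
  hence x8: "x\<^sup>2 \<ge> 8" using x2 by simp
  have e: "exp 1 < (272/100::real)" by (rule e_less_272)
  have "(exp 1)\<^sup>2 < (272/100::real)\<^sup>2" using e by (intro power_strict_mono) auto
  moreover have "(272/100::real)\<^sup>2 \<le> 8" by (simp add: power2_eq_square)
  ultimately have "(exp 1)\<^sup>2 < x\<^sup>2" using x8 by linarith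
  hence "exp 1 < x" by (rule power_less_imp_less_base) (use xpos in simp)
  hence "ln (exp 1) \<le> ln x" using xpos by (subst ln_le_cancel_iff) auto
  thus "1 \<le> ln (2 / eta M T)" unfolding x_def by simp
  have "exp (2 * ln x) = exp (ln x) * exp (ln x)" by (simp add: exp_add[symmetric])
  also have "\<dots> = x\<^sup>2" using xpos by (simp add: power2_eq_square)
  finally have "exp (2 * ln x) = x\<^sup>2" .
  hence "exp (-(2 * ln x)) = 1 / x\<^sup>2" by (simp add: exp_minus field_simps)
  thus "exp (-(2 * ln (2 / eta M T))) = 1 / (2 * real M * (real T)\<^sup>2)" unfolding x_def[symmetric] x2 .
qed


theorem lemma14:
  fixes M K T :: nat and mu :: "nat \<Rightarrow> nat \<Rightarrow> real"
    and hung :: "(nat \<Rightarrow> nat \<Rightarrow> real) \<Rightarrow> nat set \<Rightarrow> nat set \<Rightarrow> (nat \<Rightarrow> nat)"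
    and comm :: "nat \<Rightarrow> (nat \<Rightarrow> nat \<Rightarrow> real) \<Rightarrow> (nat \<Rightarrow> nat \<Rightarrow> real)"
    and start :: "nat \<Rightarrow> nat"
  assumes "1 \<le> M" and "M < K" and "1 \<le> T"
    and "\<forall>m<M. \<forall>k<K. 0 \<le> mu m k \<and> mu m k \<le> 1"
    and "\<exists>g\<in>matchings M K. \<forall>g'\<in>matchings M K. U M g' mu \<le> U M g mu \<and>
            (U M g' mu = U M g mu \<longrightarrow> (\<forall>m<M. g' m = g m))"
    and "is_hungarian hung"
    and "is_comm M K comm"
  shows "measure_pmf.prob (sample_space M K T mu)
           {\<omega>. \<forall>rho. 1 \<le> rho \<and> rho \<le> T div K \<and> reached M K T hung comm start \<omega> rho \<longrightarrow>
                 (\<forall>g\<in>matchings M K.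
                    \<bar>U M g (mu_tilde M K hung comm start \<omega> rho) - U M g mu\<bar> \<le> 2 * real M * eps M T rho)}
         \<ge> 1 - 1 / real T"
proof -
  note M = assms(1) and MK = assms(2) and T1 = assms(3) and mu = assms(4) and cm = assms(7)
  define N where "N = T div K"
  define \<Omega> where "\<Omega> = sample_space M K T mu"
  define Good where "Good = {\<omega>. \<forall>rho. 1 \<le> rho \<and> rho \<le> T div K \<and> reached M K T hung comm start \<omega> rho \<longrightarrow>
                 (\<forall>g\<in>matchings M K.
                    \<bar>U M g (mu_tilde M K hung comm start \<omega> rho) - U M g mu\<bar> \<le> 2 * real M * eps M T rho)}"
  have K: "0 < K" using MK by simp
  show ?thesis
  proof (cases "N = 0")
    case True
    have "Good = UNIV" unfolding Good_def using True N_def by auto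
    then show ?thesis unfolding Good_def[symmetric] using T1 by simp
  next
    case False
    have KT: "K \<le> T" using False K unfolding N_def by (simp add: div_eq_0_iff)
    have T2: "2 \<le> T" using KT MK M by linarith
    define L where "L = ln (2 / eta M T)"
    have L1: "1 \<le> L" unfolding L_def by (rule L_facts(1)[OF M T2])
    have L2: "exp (-(2 * L)) = 1 / (2 * real M * (real T)\<^sup>2)" unfolding L_def by (rule L_facts(2)[OF M T2])
    define sg :: "bool \<Rightarrow> real" where "sg = (\<lambda>b. if b then 1 else -1)"
    define X where "X = (\<lambda>(rho, m, k, b). {\<omega>. sg b * (emp_mean (run M K hung comm start \<omega> rho) m k - mu m k) > eps M T rho})"
    define J where "J = {1..N} \<times> {..<M} \<times> {..<K} \<times> (UNIV :: bool set)"
    have finJ: "finite J" unfolding J_def by simp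
    have cardJ: "card J = N * M * K * 2" unfolding J_def by (simp add: card_cartesian_product)
    have PX: "measure_pmf.prob \<Omega> (X x) \<le> 1 / (2 * real M * (real T)\<^sup>2)" if "x \<in> J" for x
    proof -
      obtain rho m k b where x: "x = (rho, m, k, b)" by (cases x) auto
      have r: "1 \<le> rho" "rho \<le> T div K" and m: "m < M" and k: "k < K"
        using that unfolding x J_def N_def by auto
      have sq: "(sg b)\<^sup>2 = 1" unfolding sg_def by simp
      have e0: "0 \<le> eps M T rho" unfolding eps_def L_def[symmetric] using L1 by simp
      have e2: "(eps M T rho)\<^sup>2 * rho = L"
      proof -
        have nn: "0 \<le> L / real rho" using L1 by simp
        have "(eps M T rho)\<^sup>2 = L / real rho" unfolding eps_def L_def[symmetric] using nn by simp
        then show ?thesis using r by simp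
      qed
      have "measure_pmf.prob \<Omega> (X x) \<le> exp (-(2 * (eps M T rho)\<^sup>2 * rho))"
        unfolding x X_def \<Omega>_def using tail[OF mu m k K r(1) r(2) e0 sq] by simp
      also have "2 * (eps M T rho)\<^sup>2 * rho = 2 * L" using e2 by simp
      finally show ?thesis using L2 by simp
    qed
    have "measure_pmf.prob \<Omega> (\<Union>x\<in>J. X x) \<le> (\<Sum>x\<in>J. measure_pmf.prob \<Omega> (X x))"
      by (rule measure_pmf.finite_measure_subadditive_finite[OF finJ]) auto
    also have "\<dots> \<le> (\<Sum>x\<in>J. 1 / (2 * real M * (real T)\<^sup>2))"
      by (rule sum_mono) (rule PX)
    also have "\<dots> = real (N * K) / (real T)\<^sup>2"
      using M cardJ by (simp add: field_simps)
    also have "\<dots> \<le> real T / (real T)\<^sup>2"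
    proof -
      have "N * K \<le> T" unfolding N_def by simp
      then show ?thesis by (intro divide_right_mono) (simp_all add: of_nat_mult[symmetric] del: of_nat_mult)
    qed
    also have "\<dots> = 1 / real T" by (simp add: power2_eq_square)
    finally have bad: "measure_pmf.prob \<Omega> (\<Union>x\<in>J. X x) \<le> 1 / real T" .
    have incl: "UNIV - (\<Union>x\<in>J. X x) \<subseteq> Good"
    proof
      fix \<omega> assume "\<omega> \<in> UNIV - (\<Union>x\<in>J. X x)"
      hence nb: "\<omega> \<notin> X x" if "x \<in> J" for x using that by blast
      show "\<omega> \<in> Good"
        unfolding Good_def
      proof (intro CollectI allI impI ballI)
        fix rho g assume rh: "1 \<le> rho \<and> rho \<le> T div K \<and> reached M K T hung comm start \<omega> rho"
          and g: "g \<in> matchings M K"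
        define st where "st = run M K hung comm start \<omega> rho"
        define e where "e = eps M T rho"
        have sq1: "sqrt (1 / real rho) \<le> e"
          unfolding e_def eps_def L_def[symmetric] using L1 rh by (intro real_sqrt_le_mono divide_right_mono) auto
        have hb: "\<forall>m<M. \<forall>k<K. 0 \<le> emp_mean st m k \<and> emp_mean st m k \<le> 1"
        proof (intro allI impI)
          fix m k
          have fb: "0 \<le> fst st m k \<and> fst st m k \<le> real (snd st m k)" unfolding st_def by (rule fst_bounds)
          show "0 \<le> emp_mean st m k \<and> emp_mean st m k \<le> 1"
            unfolding emp_mean_def using fb
            by (cases "snd st m k = 0") (auto simp: divide_le_eq_1)
        qed
        have cb: "\<forall>m<M. \<forall>k<K. emp_mean st m k \<le> comm rho (emp_mean st) m k \<and>
                    comm rho (emp_mean st) m k \<le> emp_mean st m k + sqrt (1 / real rho)"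
          using cm hb rh unfolding is_comm_def by auto
        have mt: "mu_tilde M K hung comm start \<omega> rho = comm rho (emp_mean st)"
          unfolding mu_tilde_def tilde_of_def st_def using rh by simp
        have dev: "\<bar>emp_mean st m k - mu m k\<bar> \<le> e" if m: "m < M" and k: "k < K" for m k
        proof -
          have "(rho, m, k, True) \<in> J" "(rho, m, k, False) \<in> J" using rh m k unfolding J_def N_def by auto
          hence "\<omega> \<notin> X (rho, m, k, True)" "\<omega> \<notin> X (rho, m, k, False)" using nb by auto
          thus ?thesis unfolding X_def sg_def st_def e_def by auto
        qed
        have "\<forall>m<M. \<bar>mu_tilde M K hung comm start \<omega> rho m (g m) - mu m (g m)\<bar> \<le> 2 * e"
        proof (intro allI impI)
          fix m assume m: "m < M"
          have gk: "g m < K" using g m unfolding matchings_def by auto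
          show "\<bar>mu_tilde M K hung comm start \<omega> rho m (g m) - mu m (g m)\<bar> \<le> 2 * e"
            unfolding mt using cb m gk dev[OF m gk] sq1 by (smt (verit))
        qed
        hence "\<bar>U M g (mu_tilde M K hung comm start \<omega> rho) - U M g mu\<bar> \<le> real M * (2 * e)"
          by (rule U_diff)
        thus "\<bar>U M g (mu_tilde M K hung comm start \<omega> rho) - U M g mu\<bar> \<le> 2 * real M * eps M T rho"
          unfolding e_def by simp
      qed
    qed
    have "measure_pmf.prob \<Omega> Good \<ge> measure_pmf.prob \<Omega> (UNIV - (\<Union>x\<in>J. X x))"
      by (rule measure_pmf.finite_measure_mono[OF incl]) simp
    moreover have "measure_pmf.prob \<Omega> (UNIV - (\<Union>x\<in>J. X x)) = 1 - measure_pmf.prob \<Omega> (\<Union>x\<in>J. X x)"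
      using measure_pmf.prob_compl[of "\<Union>x\<in>J. X x" \<Omega>] by simp
    ultimately show ?thesis using bad unfolding Good_def \<Omega>_def by linarith
  qed
qed

end
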